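(* Let $r\in\mathbb{N}$ be fixed and let $\chi:\mathbb{R}_+\to\mathbb{R}$ be a kernel such that $M_0(\chi)>0$. If $f\in CB_{\mathrm{comp}}(\mathbb{R}_+)$, then for every $1\le p<\infty$, $$\lim_{w\to\infty}\left\|E_{w,r}^{\chi}f-f\right\|_p=0.$$
   Context: $\mathbb{R}_+=(0,\infty)$. A kernel is a continuous function $\chi:\mathbb{R}_+\to\mathbb{R}$ such that: (1) $\int_{\mathbb{R}_+}|\chi(x)|\frac{dx}{x}<\infty$ and $\chi$ is bounded on $[1/e,e]$; (2) $\sum_{k\in\mathbb{Z}}\chi(e^{-k}u)=1$ for every $u\in\mathbb{R}_+$, and $M_0(\chi):=\sup_{u\in\mathbb{R}_+}\sum_{k\in\mathbb{Z}}|\chi(e^{-k}u)|<+\infty$; (3) $\lim_{\gamma\to\infty}\sum_{|k-\log u|>\gamma}|\chi(e^{-k}u)|=0$ uniformly with respect to $u\in\mathbb{R}_+$. For $r\in\mathbb{N}$, $w>0$ and a locally integrable $f:\mathbb{R}_+\to\mathbb{R}$, $$\left(E_{w,r}^{\chi}f\right)(x):=\sum_{k\in\mathbb{Z}}\chi(e^{-k}x^{w})\, w^{r}\int_1^{e^{1/w}}\!\!\cdots\!\int_1^{e^{1/w}}\sum_{m=1}^{r}(-1)^{1-m}\binom{r}{m}f\!\left(e^{k/w}(t_1\cdots t_r)^{m/r}\right)\frac{dt_1}{t_1}\cdots\frac{dt_r}{t_r},\quad x\in\mathbb{R}_+.$$ $CB_{\mathrm{comp}}(\mathbb{R}_+)$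 is the space of bounded continuous functions on $\mathbb{R}_+$ with compact support contained in $\mathbb{R}_+$. For measurable $g$, $\|g\|_p:=\left(\int_{\mathbb{R}_+}|g(x)|^p\frac{dx}{x}\right)^{1/p}$. *)

theory Defs
  imports "HOL-Analysis.Analysis"
begin

definition M0 :: "(real \<Rightarrow> real) \<Rightarrow> ennreal" where
  "M0 K = (SUP u\<in>{0<..}. (\<integral>\<^sup>+ k. ennreal \<bar>K (exp (- real_of_int k) * u)\<bar> \<partial>count_space (UNIV::int set)))"

definition is_kernel :: "(real \<Rightarrow> real) \<Rightarrow> bool" where
  "is_kernel K \<longleftrightarrow>
     continuous_on {0<..} K \<and>
     (\<integral>\<^sup>+ x\<in>{0<..}. ennreal (\<bar>K x\<bar> / x) \<partial>lborel) < \<infinity> \<and>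
     bounded (K ` {exp (-1)..exp 1}) \<and>
     (\<forall>u>0. ((\<lambda>k::int. K (exp (- real_of_int k) * u)) has_sum 1) UNIV) \<and>
     M0 K < \<infinity> \<and>
     (\<forall>\<epsilon>>0. \<exists>\<Gamma>. \<forall>\<gamma>\<ge>\<Gamma>. \<forall>u>0.
        (\<integral>\<^sup>+ k. ennreal \<bar>K (exp (- real_of_int k) * u)\<bar>
           \<partial>count_space {k::int. \<bar>real_of_int k - ln u\<bar> > \<gamma>}) < ennreal \<epsilon>)"

definition E_inner :: "(real \<Rightarrow> real) \<Rightarrow> real \<Rightarrow> nat \<Rightarrow> int \<Rightarrow> real" where
  "E_inner f w r k = w ^ r *
     (\<integral> t. (\<Sum>m=1..r. (-1::real) ^ (m - 1) * real (r choose m) *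
                f (exp (real_of_int k / w) * (\<Prod>i<r. t i) powr (real m / real r)))
            * (\<Prod>i<r. 1 / t i)
       \<partial>(PiM {..<r} (\<lambda>_. restrict_space lborel {1..exp (1 / w)})))"

definition E_op :: "(real \<Rightarrow> real) \<Rightarrow> real \<Rightarrow> nat \<Rightarrow> (real \<Rightarrow> real) \<Rightarrow> real \<Rightarrow> real" where
  "E_op K w r f x = (\<Sum>\<^sub>\<infinity> k::int. K (exp (- real_of_int k) * x powr w) * E_inner f w r k)"

definition Lp_mellin_pow :: "real \<Rightarrow> (real \<Rightarrow> real) \<Rightarrow> ennreal" where
  "Lp_mellin_pow p g = (\<integral>\<^sup>+ x\<in>{0<..}. ennreal (\<bar>g x\<bar> powr p / x) \<partial>lborel)"

(* ||g||_p (meaningful when Lp_mellin_pow p g < \<infinity>) *)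
definition Lp_mellin_norm :: "real \<Rightarrow> (real \<Rightarrow> real) \<Rightarrow> real" where
  "Lp_mellin_norm p g = enn2real (Lp_mellin_pow p g) powr (1 / p)"

definition CB_comp :: "(real \<Rightarrow> real) \<Rightarrow> bool" where
  "CB_comp f \<longleftrightarrow> continuous_on {0<..} f \<and> bounded (f ` {0<..}) \<and>
     (\<exists>a b. 0 < a \<and> a \<le> b \<and> (\<forall>x>0. x \<notin> {a..b} \<longrightarrow> f x = 0))"

end

theory Submission
  imports Defs
begin

lemma exp_subst:
  fixes g :: "real \<Rightarrow> real"
  assumes gm[measurable]: "g \<in> borel_measurable borel" and g0: "\<And>x. g x \<ge> 0"
  shows "(\<integral>\<^sup>+x\<in>{0<..}. ennreal (g x / x) \<partial>lborel) = (\<integral>\<^sup>+s. ennreal (g (exp s)) \<partial>lborel)"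
proof -
  define A where "A = (\<lambda>n::nat. {exp (- real n)..exp (real n)})"
  define B where "B = (\<lambda>n::nat. {- real n..real n})"
  have incA: "incseq A" unfolding A_def incseq_def by auto
  have incB: "incseq B" unfolding B_def incseq_def by auto
  have UA: "(\<Union>n. A n) = {0<..}"
  proof safe
    fix x :: real assume "x > 0"
    obtain n :: nat where n: "\<bar>ln x\<bar> \<le> real n" using real_arch_simple by blast
    have "exp (- real n) \<le> exp (ln x)" "exp (ln x) \<le> exp (real n)" using n by auto
    then have "x \<in> A n" using \<open>x>0\<close> by (auto simp: A_def)
    then show "x \<in> (\<Union>n. A n)" by blast
  qed (auto simp: A_def intro: less_le_trans[OF exp_gt_zero])
  have UB: "(\<Union>n. B n) = UNIV"
  proof safe
    fix x :: real
    obtain n :: nat where n: "\<bar>x\<bar> \<le> real n" using real_arch_simple by blast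
    then have "x \<in> B n" by (auto simp: B_def)
    then show "x \<in> (\<Union>n. B n)" by blast
  qed auto
  have eq: "(\<integral>\<^sup>+x\<in>A n. ennreal (g x / x) \<partial>lborel) = (\<integral>\<^sup>+s\<in>B n. ennreal (g (exp s)) \<partial>lborel)" for n
  proof -
    have "(\<integral>\<^sup>+x. (g x / x) * indicator {exp (- real n)..exp (real n)} x \<partial>lborel) =
          (\<integral>\<^sup>+x. (g (exp x) / exp x) * exp x * indicator {- real n..real n} x \<partial>lborel)"
      by (rule nn_integral_substitution[where g = exp and g' = exp]) (auto intro!: derivative_eq_intros continuous_intros simp: set_borel_measurable_def)
    then show ?thesis
      by (simp add: A_def B_def nn_integral_set_ennreal)
  qed
  have "(\<integral>\<^sup>+x\<in>{0<..}. ennreal (g x / x) \<partial>lborel) = emeasure (density lborel (\<lambda>x. ennreal (g x / x))) (\<Union>n. A n)"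
    by (subst emeasure_density) (auto simp: UA)
  also have "\<dots> = (SUP n. emeasure (density lborel (\<lambda>x. ennreal (g x / x))) (A n))"
    using incA by (intro SUP_emeasure_incseq[symmetric]) (auto simp: A_def)
  also have "\<dots> = (SUP n. emeasure (density lborel (\<lambda>s. ennreal (g (exp s)))) (B n))"
  proof (intro SUP_cong refl)
    fix n
    show "emeasure (density lborel (\<lambda>x. ennreal (g x / x))) (A n) = emeasure (density lborel (\<lambda>s. ennreal (g (exp s)))) (B n)"
      using eq[of n] by (subst emeasure_density, simp, simp add: A_def)+ (simp add: B_def)
  qed
  also have "\<dots> = emeasure (density lborel (\<lambda>s. ennreal (g (exp s)))) (\<Union>n. B n)"
    using incB by (intro SUP_emeasure_incseq) (auto simp: B_def)
  also have "\<dots> = (\<integral>\<^sup>+s. ennreal (g (exp s)) \<partial>lborel)"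
    by (subst emeasure_density) (auto simp: UB)
  finally show ?thesis .
qed

definition mu :: "real \<Rightarrow> nat \<Rightarrow> (nat \<Rightarrow> real) measure" where
  "mu w r = PiM {..<r} (\<lambda>_. restrict_space lborel {1..exp (1/w)})"

lemma one_dim:
  assumes "c \<ge> 1"
  shows "integrable (restrict_space lborel {1..c}) (\<lambda>x::real. 1 / x)"
    "integral\<^sup>L (restrict_space lborel {1..c}) (\<lambda>x::real. 1 / x) = ln c"
proof -
  have ci: "continuous_on {1..c} (\<lambda>x::real. 1 / x)"
    by (intro continuous_intros) auto
  have si: "set_integrable lborel {1..c} (\<lambda>x::real. 1 / x)"
    unfolding set_integrable_def by (rule borel_integrable_compact[OF compact_Icc ci])
  then show "integrable (restrict_space lborel {1..c}) (\<lambda>x::real. 1 / x)"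
    by (subst integrable_restrict_space) (auto simp: set_integrable_def)
  have "((\<lambda>x::real. 1 / x) has_integral (ln c - ln 1)) {1..c}"
    using assms by (intro fundamental_theorem_of_calculus) (auto intro!: derivative_eq_intros simp: has_real_derivative_iff_has_vector_derivative[symmetric] field_simps)
  then have "integral {1..c} (\<lambda>x::real. 1 / x) = ln c" by (simp add: integral_unique)
  moreover have "integral\<^sup>L (restrict_space lborel {1..c}) (\<lambda>x::real. 1 / x) = set_lebesgue_integral lborel {1..c} (\<lambda>x::real. 1 / x)"
    by (subst integral_restrict_space) (auto simp: set_lebesgue_integral_def)
  ultimately show "integral\<^sup>L (restrict_space lborel {1..c}) (\<lambda>x::real. 1 / x) = ln c"
    using set_borel_integral_eq_integral(2)[OF si] by simp
qed

lemma psf: "product_sigma_finite (\<lambda>_::nat. restrict_space lborel {1..c::real})"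
  unfolding product_sigma_finite_def
  by (auto intro!: sigma_finite_measure_restrict_space lborel.sigma_finite_measure_axioms)

lemma rho_int:
  assumes "w > 0"
  shows "integrable (mu w r) (\<lambda>t. \<Prod>i<r. 1 / t i)"
    "integral\<^sup>L (mu w r) (\<lambda>t. \<Prod>i<r. 1 / t i) = (1 / w) ^ r"
proof -
  have c: "exp (1/w) \<ge> 1" using assms by simp
  show "integrable (mu w r) (\<lambda>t. \<Prod>i<r. 1 / t i)"
    unfolding mu_def
    by (rule product_sigma_finite.product_integrable_prod[OF psf, where I="{..<r}" and f="\<lambda>_ x. 1 / x", simplified])
       (use one_dim(1)[OF c] in auto)
  have "integral\<^sup>L (mu w r) (\<lambda>t. \<Prod>i<r. 1 / t i) = (\<Prod>i<r. ln (exp (1/w)))"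
    unfolding mu_def
    by (subst product_sigma_finite.product_integral_prod[OF psf, where I="{..<r}" and f="\<lambda>_ x. 1 / x", simplified])
       (use one_dim[OF c] in auto)
  then show "integral\<^sup>L (mu w r) (\<lambda>t. \<Prod>i<r. 1 / t i) = (1 / w) ^ r" by simp
qed

lemma space_mu: "t \<in> space (mu w r) \<longleftrightarrow> t \<in> PiE {..<r} (\<lambda>_. {1..exp (1/w)})"
  unfolding mu_def by (simp add: space_PiM)

lemma comp_meas: "i \<in> I \<Longrightarrow> (\<lambda>t. t i) \<in> borel_measurable (PiM I (\<lambda>_. restrict_space lborel (S::real set)))"
  by (rule measurable_compose[OF measurable_component_singleton, where g = "\<lambda>x. x"])
     (auto intro!: measurable_restrict_space1)

lemma rho_meas: "(\<lambda>t. \<Prod>i<r. 1 / t i) \<in> borel_measurable (mu w r)"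
  unfolding mu_def by (intro borel_measurable_prod borel_measurable_divide comp_meas) auto

lemma space_mu_ge1: "t \<in> space (mu w r) \<Longrightarrow> i < r \<Longrightarrow> 1 \<le> t i"
  and space_mu_le: "t \<in> space (mu w r) \<Longrightarrow> i < r \<Longrightarrow> t i \<le> exp (1/w)"
  by (auto simp: space_mu PiE_def Pi_def)

lemma rho_pos: "t \<in> space (mu w r) \<Longrightarrow> 0 < (\<Prod>i<r. 1 / t i)"
  by (rule prod_pos) (auto dest: space_mu_ge1 intro: less_le_trans[OF zero_less_one])

lemma rho_le1: "t \<in> space (mu w r) \<Longrightarrow> (\<Prod>i<r. 1 / t i) \<le> 1"
proof (rule prod_le_1)
  fix i assume "t \<in> space (mu w r)" "i \<in> {..<r}"
  then have "1 \<le> t i" by (auto dest: space_mu_ge1)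
  then show "0 \<le> 1 / t i \<and> 1 / t i \<le> 1" by auto
qed

lemma avg_bound:
  fixes h :: "(nat \<Rightarrow> real) \<Rightarrow> real"
  assumes w: "w > 0" and hm: "h \<in> borel_measurable (mu w r)"
    and hb: "\<And>t. t \<in> space (mu w r) \<Longrightarrow> \<bar>h t - v\<bar> \<le> \<eta>"
  shows "\<bar>w ^ r * integral\<^sup>L (mu w r) (\<lambda>t. h t * (\<Prod>i<r. 1 / t i)) - v\<bar> \<le> \<eta>"
proof -
  define \<rho> :: "(nat \<Rightarrow> real) \<Rightarrow> real" where "\<rho> = (\<lambda>t. \<Prod>i<r. 1 / t i)"
  have \<rho>i: "integrable (mu w r) \<rho>" and \<rho>v: "integral\<^sup>L (mu w r) \<rho> = (1/w)^r"
    using rho_int[OF w] by (auto simp: \<rho>_def)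
  have \<rho>m: "\<rho> \<in> borel_measurable (mu w r)" using rho_meas by (simp add: \<rho>_def)
  have \<rho>p: "t \<in> space (mu w r) \<Longrightarrow> 0 < \<rho> t" for t using rho_pos by (simp add: \<rho>_def)
  have i1: "integrable (mu w r) (\<lambda>t. (h t - v) * \<rho> t)"
  proof (rule Bochner_Integration.integrable_bound[where f = "\<lambda>t. \<eta> * \<rho> t"])
    show "integrable (mu w r) (\<lambda>t. \<eta> * \<rho> t)" using \<rho>i by simp
    show "(\<lambda>t. (h t - v) * \<rho> t) \<in> borel_measurable (mu w r)" using hm \<rho>m by measurable
    show "AE t in mu w r. norm ((h t - v) * \<rho> t) \<le> norm (\<eta> * \<rho> t)"
    proof (rule AE_I2)
      fix t assume t: "t \<in> space (mu w r)"
      have "\<eta> \<ge> 0" using hb[OF t] by linarith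
      then show "norm ((h t - v) * \<rho> t) \<le> norm (\<eta> * \<rho> t)"
        using hb[OF t] \<rho>p[OF t] by (simp add: abs_mult mult_right_mono)
    qed
  qed
  have "integral\<^sup>L (mu w r) (\<lambda>t. h t * \<rho> t) = integral\<^sup>L (mu w r) (\<lambda>t. (h t - v) * \<rho> t + v * \<rho> t)"
    by (simp add: algebra_simps)
  also have "\<dots> = integral\<^sup>L (mu w r) (\<lambda>t. (h t - v) * \<rho> t) + v * (1/w)^r"
    using i1 \<rho>i \<rho>v by simp
  finally have eq: "w ^ r * integral\<^sup>L (mu w r) (\<lambda>t. h t * \<rho> t) - v = w ^ r * integral\<^sup>L (mu w r) (\<lambda>t. (h t - v) * \<rho> t)"
    using w by (simp add: algebra_simps power_divide)
  have "\<bar>integral\<^sup>L (mu w r) (\<lambda>t. (h t - v) * \<rho> t)\<bar> \<le> integral\<^sup>L (mu w r) (\<lambda>t. \<bar>(h t - v) * \<rho> t\<bar>)"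
    using integral_norm_bound[of "mu w r" "\<lambda>t. (h t - v) * \<rho> t"] by simp
  also have "\<dots> \<le> integral\<^sup>L (mu w r) (\<lambda>t. \<eta> * \<rho> t)"
    using integrable_abs[OF i1] \<rho>i hb \<rho>p
    by (intro integral_mono) (auto simp: abs_mult mult_right_mono less_imp_le)
  also have "\<dots> = \<eta> * (1/w)^r" using \<rho>v by simp
  finally have "\<bar>w ^ r * integral\<^sup>L (mu w r) (\<lambda>t. (h t - v) * \<rho> t)\<bar> \<le> w ^ r * (\<eta> * (1/w)^r)"
    using w by (simp add: abs_mult mult_left_mono)
  also have "\<dots> = \<eta>" using w by (simp add: power_divide)
  finally show ?thesis using eq by (simp add: \<rho>_def)
qed

lemma Lg_facts:
  assumes t: "t \<in> space (mu w r)" and w: "w > 0"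
  shows "0 < (\<Prod>i<r. t i)" "ln (\<Prod>i<r. t i) = (\<Sum>i<r. ln (t i))"
    "0 \<le> (\<Sum>i<r. ln (t i))" "(\<Sum>i<r. ln (t i)) \<le> real r / w"
proof -
  have pos: "i < r \<Longrightarrow> 0 < t i" for i using space_mu_ge1[OF t] by (meson less_le_trans zero_less_one)
  show "0 < (\<Prod>i<r. t i)" using pos by (auto intro!: prod_pos)
  show "ln (\<Prod>i<r. t i) = (\<Sum>i<r. ln (t i))" using pos by (subst ln_prod) (auto dest!: pos simp: less_le)
  show "0 \<le> (\<Sum>i<r. ln (t i))" using space_mu_ge1[OF t] by (intro sum_nonneg) auto
  have "(\<Sum>i<r. ln (t i)) \<le> (\<Sum>i<r. 1 / w)"
  proof (intro sum_mono)
    fix i assume "i \<in> {..<r}"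
    then have "t i \<le> exp (1/w)" "0 < t i" using space_mu_le[OF t] pos by auto
    then show "ln (t i) \<le> 1 / w" by (metis ln_exp ln_le_cancel_iff exp_gt_zero)
  qed
  then show "(\<Sum>i<r. ln (t i)) \<le> real r / w" by simp
qed

lemma Lg_meas: "(\<lambda>t. \<Sum>i<r. ln (t i)) \<in> borel_measurable (mu w r)"
  unfolding mu_def
  by (intro borel_measurable_sum, rule measurable_compose[OF comp_meas borel_measurable_ln[OF measurable_ident_sets]]) auto

definition alpha :: "nat \<Rightarrow> nat \<Rightarrow> real" where
  "alpha r m = (-1::real) ^ (m - 1) * real (r choose m)"

definition hfun :: "(real \<Rightarrow> real) \<Rightarrow> real \<Rightarrow> nat \<Rightarrow> int \<Rightarrow> (nat \<Rightarrow> real) \<Rightarrow> real" where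
  "hfun F w r k t = (\<Sum>m=1..r. alpha r m * F (real_of_int k / w + real m / real r * (\<Sum>i<r. ln (t i))))"

lemma hfun_meas:
  assumes [measurable]: "F \<in> borel_measurable borel"
  shows "hfun F w r k \<in> borel_measurable (mu w r)"
proof -
  have [measurable]: "(\<lambda>t. \<Sum>i<r. ln (t i)) \<in> borel_measurable (mu w r)" by (rule Lg_meas)
  show ?thesis unfolding hfun_def[abs_def] by measurable
qed

lemma E_inner_repr:
  assumes w: "w > 0"
  shows "E_inner f w r k = w ^ r * integral\<^sup>L (mu w r) (\<lambda>t. hfun (\<lambda>s. f (exp s)) w r k t * (\<Prod>i<r. 1 / t i))"
proof -
  have "integral\<^sup>L (mu w r) (\<lambda>t. (\<Sum>m = 1..r. (- 1) ^ (m - 1) * real (r choose m) * f (exp (real_of_int k / w) * (\<Prod>i<r. t i) powr (real m / real r))) * (\<Prod>i<r. 1 / t i))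
     = integral\<^sup>L (mu w r) (\<lambda>t. hfun (\<lambda>s. f (exp s)) w r k t * (\<Prod>i<r. 1 / t i))"
  proof (rule Bochner_Integration.integral_cong[OF refl])
    fix t assume t: "t \<in> space (mu w r)"
    have "exp (real_of_int k / w) * (\<Prod>i<r. t i) powr (real m / real r) = exp (real_of_int k / w + real m / real r * (\<Sum>i<r. ln (t i)))" for m
      using Lg_facts[OF t w] by (simp add: powr_def exp_add del: prod_zero_iff)
    then show "(\<Sum>m = 1..r. (- 1) ^ (m - 1) * real (r choose m) * f (exp (real_of_int k / w) * (\<Prod>i<r. t i) powr (real m / real r))) * (\<Prod>i<r. 1 / t i) =
         hfun (\<lambda>s. f (exp s)) w r k t * (\<Prod>i<r. 1 / t i)"
      by (simp add: hfun_def alpha_def)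
  qed
  then show ?thesis unfolding E_inner_def mu_def by simp
qed

lemma alpha_sum: "r \<ge> 1 \<Longrightarrow> (\<Sum>m=1..r. alpha r m) = 1"
proof -
  assume r: "r \<ge> 1"
  have "(\<Sum>i\<le>r. (- 1) ^ i * real (r choose i)) = 0" using choose_alternating_sum[of r] r by simp
  moreover have "(\<Sum>i\<le>r. (- 1) ^ i * real (r choose i)) = 1 + (\<Sum>i=1..r. (- 1) ^ i * real (r choose i))"
    by (simp add: atMost_atLeast0 sum.atLeast_Suc_atMost)
  moreover have "(\<Sum>m=1..r. alpha r m) = - (\<Sum>i=1..r. (- 1) ^ i * real (r choose i))"
    unfolding sum_negf[symmetric] alpha_def
    by (intro sum.cong refl) (auto simp: power_eq_if)
  ultimately show ?thesis by linarith
qed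

lemma alpha_abs_sum: "(\<Sum>m=1..r. \<bar>alpha r m\<bar>) \<le> 2 ^ r"
proof -
  have "(\<Sum>m=1..r. \<bar>alpha r m\<bar>) = (\<Sum>m=1..r. real (r choose m))" by (simp add: alpha_def abs_mult)
  also have "\<dots> \<le> (\<Sum>m\<le>r. real (r choose m))" by (intro sum_mono2) auto
  also have "\<dots> = 2 ^ r" using choose_row_sum[of r] by (metis of_nat_numeral of_nat_power of_nat_sum)
  finally show ?thesis .
qed

lemma arg_range:
  assumes t: "t \<in> space (mu w r)" and w: "w > 0" and m: "m \<in> {1..r}"
  shows "x \<le> x + real m / real r * (\<Sum>i<r. ln (t i))"
    "x + real m / real r * (\<Sum>i<r. ln (t i)) \<le> x + real r / w"
proof -
  note L = Lg_facts[OF t w]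
  have q: "0 \<le> real m / real r" "real m / real r \<le> 1" using m by auto
  show "x \<le> x + real m / real r * (\<Sum>i<r. ln (t i))" using q L by simp
  have "real m / real r * (\<Sum>i<r. ln (t i)) \<le> 1 * (\<Sum>i<r. ln (t i))"
    using q L by (intro mult_right_mono) auto
  then show "x + real m / real r * (\<Sum>i<r. ln (t i)) \<le> x + real r / w" using L by simp
qed

lemma hfun_bound:
  assumes t: "t \<in> space (mu w r)" and w: "w > 0"
    and Fb: "\<And>s. real_of_int k / w \<le> s \<Longrightarrow> s \<le> real_of_int k / w + real r / w \<Longrightarrow> \<bar>F s - v\<bar> \<le> \<eta>"
  shows "\<bar>hfun F w r k t - (\<Sum>m=1..r. alpha r m) * v\<bar> \<le> 2 ^ r * \<eta>"
proof -
  have "\<bar>hfun F w r k t - (\<Sum>m=1..r. alpha r m) * v\<bar>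
      = \<bar>\<Sum>m=1..r. alpha r m * (F (real_of_int k / w + real m / real r * (\<Sum>i<r. ln (t i))) - v)\<bar>"
    by (simp add: hfun_def sum_distrib_right sum_distrib_left sum_subtractf algebra_simps)
  also have "\<dots> \<le> (\<Sum>m=1..r. \<bar>alpha r m\<bar> * \<eta>)"
  proof (rule order_trans[OF sum_abs], intro sum_mono)
    fix m assume m: "m \<in> {1..r}"
    have "\<bar>F (real_of_int k / w + real m / real r * (\<Sum>i<r. ln (t i))) - v\<bar> \<le> \<eta>"
      by (rule Fb) (use arg_range[OF t w m] in auto)
    then show "\<bar>alpha r m * (F (real_of_int k / w + real m / real r * (\<Sum>i<r. ln (t i))) - v)\<bar> \<le> \<bar>alpha r m\<bar> * \<eta>"
      by (simp add: abs_mult mult_left_mono)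
  qed
  also have "\<dots> \<le> 2 ^ r * \<eta>"
  proof -
    have "\<eta> \<ge> 0" using Fb[of "real_of_int k / w"] w by (simp add: order_trans[OF abs_ge_zero])
    then show ?thesis using alpha_abs_sum[of r] by (simp add: sum_distrib_right[symmetric] mult_right_mono)
  qed
  finally show ?thesis .
qed

lemma c_approx:
  assumes w: "w > 0" and r: "r \<ge> 1"
    and Fm: "(\<lambda>s. f (exp s)) \<in> borel_measurable borel"
    and Fb: "\<And>s. real_of_int k / w \<le> s \<Longrightarrow> s \<le> real_of_int k / w + real r / w \<Longrightarrow> \<bar>f (exp s) - v\<bar> \<le> \<eta>"
  shows "\<bar>E_inner f w r k - v\<bar> \<le> 2 ^ r * \<eta>"
proof -
  have "\<bar>w ^ r * integral\<^sup>L (mu w r) (\<lambda>t. hfun (\<lambda>s. f (exp s)) w r k t * (\<Prod>i<r. 1 / t i)) - v\<bar> \<le> 2 ^ r * \<eta>"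
    using hfun_bound[OF _ w, of _ r k "\<lambda>s. f (exp s)" v \<eta>] Fb alpha_sum[OF r]
    by (intro avg_bound[OF w hfun_meas[OF Fm]]) auto
  then show ?thesis using E_inner_repr[OF w] by simp
qed

locale thmctx =
  fixes K f :: "real \<Rightarrow> real" and r :: nat and a b Bf :: real
  assumes r: "r \<ge> 1" and kern: "is_kernel K"
    and fcont: "continuous_on {0<..} f" and fbd: "\<And>x. x > 0 \<Longrightarrow> \<bar>f x\<bar> \<le> Bf"
    and ab: "0 < a" "a \<le> b" and fsupp: "\<And>x. x > 0 \<Longrightarrow> x \<notin> {a..b} \<Longrightarrow> f x = 0"
begin

definition F where "F s = f (exp s)"

lemma Fcont: "continuous_on UNIV F"
  unfolding F_def[abs_def]
  by (rule continuous_on_compose2[OF fcont]) (auto intro!: continuous_intros)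

lemma Fm[measurable]: "F \<in> borel_measurable borel"
  by (rule borel_measurable_continuous_onI[OF Fcont])

lemma Fb: "\<bar>F s\<bar> \<le> Bf" unfolding F_def by (rule fbd) simp

lemma Bf0: "Bf \<ge> 0" using Fb[of 0] by linarith

lemma F0: "s < ln a \<or> s > ln b \<Longrightarrow> F s = 0"
proof -
  assume s: "s < ln a \<or> s > ln b"
  have "exp s < a \<or> exp s > b"
  proof (cases "s < ln a")
    case True
    then have "exp s < exp (ln a)" by simp
    then show ?thesis using ab by simp
  next
    case False
    then have "exp (ln b) < exp s" using s by simp
    then show ?thesis using ab by simp
  qed
  then show ?thesis unfolding F_def by (intro fsupp) auto
qed

lemma F_unif: "\<eta> > 0 \<Longrightarrow> \<exists>\<delta>>0. \<forall>s s'. \<bar>s - s'\<bar> \<le> \<delta> \<longrightarrow> \<bar>F s - F s'\<bar> \<le> \<eta>"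
proof -
  assume \<eta>: "\<eta> > 0"
  define J where "J = {ln a - 1..ln b + 1}"
  have "uniformly_continuous_on J F"
    by (rule compact_uniformly_continuous[OF continuous_on_subset[OF Fcont]]) (auto simp: J_def)
  then obtain d where d: "d > 0" "\<And>s s'. s \<in> J \<Longrightarrow> s' \<in> J \<Longrightarrow> dist s' s < d \<Longrightarrow> dist (F s') (F s) < \<eta>"
    unfolding uniformly_continuous_on_def using \<eta> by metis
  define \<delta> where "\<delta> = min (d/2) (1/2)"
  have "\<bar>F s - F s'\<bar> \<le> \<eta>" if "\<bar>s - s'\<bar> \<le> \<delta>" for s s'
  proof (cases "s \<in> J \<and> s' \<in> J")
    case True
    then show ?thesis using d(2)[of s' s] that d(1) by (simp add: \<delta>_def dist_real_def)
  next
    case False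
    have "\<bar>s - s'\<bar> \<le> 1/2" using that by (simp add: \<delta>_def)
    then have h: "s - s' \<le> 1/2" "s' - s \<le> 1/2" by linarith+
    have "(s < ln a \<or> s > ln b) \<and> (s' < ln a \<or> s' > ln b)"
      using False h by (auto simp: J_def)
    then show ?thesis using F0 \<eta> by simp
  qed
  moreover have "\<delta> > 0" using d by (simp add: \<delta>_def)
  ultimately show ?thesis by blast
qed

lemma c_bound: "w > 0 \<Longrightarrow> \<bar>E_inner f w r k\<bar> \<le> 2 ^ r * Bf"
  using c_approx[of w r f k 0 Bf] r Fm fbd unfolding F_def[abs_def] by simp

lemma c_zero:
  assumes w: "w > 0" and k: "k \<notin> {\<lceil>w * ln a\<rceil> - int r..\<lfloor>w * ln b\<rfloor>}"
  shows "E_inner f w r k = 0"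
proof -
  have "\<bar>E_inner f w r k - 0\<bar> \<le> 2 ^ r * 0"
  proof (rule c_approx[OF w r Fm[unfolded F_def[abs_def]]])
    fix s assume s: "real_of_int k / w \<le> s" "s \<le> real_of_int k / w + real r / w"
    show "\<bar>f (exp s) - 0\<bar> \<le> 0"
    proof (cases "k > \<lfloor>w * ln b\<rfloor>")
      case True
      then have "real_of_int k > w * ln b" by linarith
      then have "real_of_int k / w > ln b" using w by (simp add: field_simps)
      then show ?thesis using F0[of s] s by (simp add: F_def)
    next
      case False
      then have "k + int r < \<lceil>w * ln a\<rceil>" using k by auto
      then have "real_of_int k + real r < w * ln a" by linarith
      then have "real_of_int k / w + real r / w < ln a" using w by (simp add: field_simps)
      then show ?thesis using F0[of s] s by (simp add: F_def)
    qed
  qed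
  then show ?thesis by simp
qed

lemma c_close:
  assumes w: "w > 0" and d: "\<forall>s s'. \<bar>s - s'\<bar> \<le> \<delta> \<longrightarrow> \<bar>F s - F s'\<bar> \<le> \<eta>" and rw: "real r / w \<le> \<delta>"
  shows "\<bar>E_inner f w r k - F (real_of_int k / w)\<bar> \<le> 2 ^ r * \<eta>"
proof (rule c_approx[OF w r Fm[unfolded F_def[abs_def]]])
  fix s assume s: "real_of_int k / w \<le> s" "s \<le> real_of_int k / w + real r / w"
  then have "\<bar>s - real_of_int k / w\<bar> \<le> \<delta>" using rw by (simp add: abs_le_iff)
  then have "\<bar>F s - F (real_of_int k / w)\<bar> \<le> \<eta>" using d by blast
  then show "\<bar>f (exp s) - F (real_of_int k / w)\<bar> \<le> \<eta>" by (simp add: F_def)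
qed

end

context thmctx begin

lemma Kc: "continuous_on {0<..} K" and Kint: "(\<integral>\<^sup>+x\<in>{0<..}. ennreal (\<bar>K x\<bar> / x) \<partial>lborel) < \<infinity>"
  and Ksum: "\<And>u. u > 0 \<Longrightarrow> ((\<lambda>k::int. K (exp (- real_of_int k) * u)) has_sum 1) UNIV"
  and KM: "M0 K < \<infinity>"
  and Ktail: "\<And>\<epsilon>. \<epsilon> > 0 \<Longrightarrow> \<exists>\<Gamma>. \<forall>\<gamma>\<ge>\<Gamma>. \<forall>u>0.
        (\<integral>\<^sup>+ k. ennreal \<bar>K (exp (- real_of_int k) * u)\<bar> \<partial>count_space {k::int. \<bar>real_of_int k - ln u\<bar> > \<gamma>}) < ennreal \<epsilon>"
  using kern unfolding is_kernel_def by blast+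

definition M where "M = enn2real (M0 K)"

lemma M0: "M \<ge> 0" by (simp add: M_def)

lemma KMle: "u > 0 \<Longrightarrow> (\<integral>\<^sup>+k. ennreal \<bar>K (exp (- real_of_int k) * u)\<bar> \<partial>count_space UNIV) \<le> ennreal M"
proof -
  assume u: "u > 0"
  have "(\<integral>\<^sup>+k. ennreal \<bar>K (exp (- real_of_int k) * u)\<bar> \<partial>count_space UNIV) \<le> M0 K"
    unfolding M0_def using u by (intro SUP_upper) auto
  also have "M0 K = ennreal M" using KM by (simp add: M_def ennreal_enn2real_if)
  finally show ?thesis .
qed

lemma kint:
  assumes u: "u > 0" and c: "\<And>k. \<bar>c k\<bar> \<le> C"
  shows "integrable (count_space UNIV) (\<lambda>k::int. K (exp (- real_of_int k) * u) * c k)"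
proof (rule integrableI_bounded)
  show "(\<lambda>k::int. K (exp (- real_of_int k) * u) * c k) \<in> borel_measurable (count_space UNIV)" by simp
  have C0: "C \<ge> 0" using c[of 0] by linarith
  have "(\<integral>\<^sup>+ k. ennreal (norm (K (exp (- real_of_int k) * u) * c k)) \<partial>count_space UNIV)
      \<le> (\<integral>\<^sup>+ k. ennreal C * ennreal \<bar>K (exp (- real_of_int k) * u)\<bar> \<partial>count_space UNIV)"
    using c C0 by (intro nn_integral_mono) (auto simp: abs_mult ennreal_mult[symmetric] mult.commute intro!: ennreal_leI mult_right_mono)
  also have "\<dots> = ennreal C * (\<integral>\<^sup>+ k. ennreal \<bar>K (exp (- real_of_int k) * u)\<bar> \<partial>count_space UNIV)"
    by (rule nn_integral_cmult) simp
  also have "\<dots> \<le> ennreal C * ennreal M" by (intro mult_left_mono KMle u) simp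
  also have "\<dots> < \<infinity>" using C0 M0 by (simp add: ennreal_mult[symmetric] del: ennreal_mult')
  finally show "(\<integral>\<^sup>+ k. ennreal (norm (K (exp (- real_of_int k) * u) * c k)) \<partial>count_space UNIV) < \<infinity>" .
qed

lemma E_op_int:
  assumes w: "w > 0" and x: "x > 0"
  shows "E_op K w r f x = (\<integral>k. K (exp (- real_of_int k) * x powr w) * E_inner f w r k \<partial>count_space UNIV)"
proof -
  have "integrable (count_space UNIV) (\<lambda>k::int. K (exp (- real_of_int k) * x powr w) * E_inner f w r k)"
    using x by (intro kint[where C = "2 ^ r * Bf"] c_bound w) simp
  then show ?thesis
    unfolding E_op_def by (subst infsetsum_infsum[symmetric]) (auto simp: abs_summable_on_def infsetsum_def)
qed

lemma K_one:
  assumes u: "u > 0"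
  shows "(\<integral>k. K (exp (- real_of_int k) * u) \<partial>count_space UNIV) = 1"
proof -
  have i: "integrable (count_space UNIV) (\<lambda>k::int. K (exp (- real_of_int k) * u) * 1)"
    using u by (intro kint[where C = 1]) auto
  have "infsum (\<lambda>k::int. K (exp (- real_of_int k) * u)) UNIV = 1" using Ksum[OF u] by (rule infsumI)
  then show ?thesis using i
    by (subst (asm) infsetsum_infsum[symmetric]) (auto simp: abs_summable_on_def infsetsum_def)
qed

end

context thmctx begin

lemma pointwise_bound:
  assumes w: "w > 0" and x: "x > 0"
  shows "ennreal \<bar>E_op K w r f x - f x\<bar> \<le>
    (\<integral>\<^sup>+k. ennreal \<bar>K (exp (- real_of_int k) * x powr w) * (E_inner f w r k - f x)\<bar> \<partial>count_space UNIV)"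
proof -
  define u where "u = x powr w"
  have u: "u > 0" using x by (simp add: u_def)
  have i1: "integrable (count_space UNIV) (\<lambda>k::int. K (exp (- real_of_int k) * u) * E_inner f w r k)"
    using u by (intro kint[where C = "2 ^ r * Bf"] c_bound w) simp
  have i2: "integrable (count_space UNIV) (\<lambda>k::int. K (exp (- real_of_int k) * u) * f x)"
    using u fbd[OF x] by (intro kint[where C = "Bf"]) simp
  have "E_op K w r f x - f x = (\<integral>k. K (exp (- real_of_int k) * u) * E_inner f w r k \<partial>count_space UNIV)
      - (\<integral>k. K (exp (- real_of_int k) * u) * f x \<partial>count_space UNIV)"
    using E_op_int[OF w x] K_one[OF u] by (simp add: u_def)
  also have "\<dots> = (\<integral>k. K (exp (- real_of_int k) * u) * (E_inner f w r k - f x) \<partial>count_space UNIV)"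
    using i1 i2 by (subst Bochner_Integration.integral_diff[symmetric]) (auto simp: algebra_simps)
  finally have eq: "E_op K w r f x - f x = \<dots>" .
  have i3: "integrable (count_space UNIV) (\<lambda>k::int. K (exp (- real_of_int k) * u) * (E_inner f w r k - f x))"
    using i1 i2 by (simp add: algebra_simps)
  show ?thesis unfolding eq using integral_norm_bound_ennreal[OF i3] by (simp add: u_def)
qed

lemma unif_conv:
  assumes \<epsilon>: "\<epsilon> > 0"
  shows "\<exists>w0>0. \<forall>w\<ge>w0. \<forall>x>0. \<bar>E_op K w r f x - f x\<bar> \<le> \<epsilon>"
proof -
  define D where "D = 2 ^ r * Bf + Bf"
  have D0: "D \<ge> 0" using Bf0 by (simp add: D_def)
  define \<epsilon>1 where "\<epsilon>1 = \<epsilon> / (2 * (D + 1))"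
  have \<epsilon>1: "\<epsilon>1 > 0" using \<epsilon> D0 by (simp add: \<epsilon>1_def)
  obtain \<Gamma> where \<Gamma>: "\<And>\<gamma> u. \<gamma> \<ge> \<Gamma> \<Longrightarrow> u > 0 \<Longrightarrow>
        (\<integral>\<^sup>+ k. ennreal \<bar>K (exp (- real_of_int k) * u)\<bar> \<partial>count_space {k::int. \<bar>real_of_int k - ln u\<bar> > \<gamma>}) < ennreal \<epsilon>1"
    using Ktail[OF \<epsilon>1] by blast
  define \<gamma> where "\<gamma> = max \<Gamma> 0"
  define A where "A = (2 ^ r + 1) * (M + 1)"
  have A: "A > 0" using M0 by (simp add: A_def add_pos_nonneg)
  define \<eta> where "\<eta> = \<epsilon> / (2 * A)"
  have \<eta>: "\<eta> > 0" using \<epsilon> A by (simp add: \<eta>_def)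
  obtain \<delta> where \<delta>: "\<delta> > 0" "\<forall>s s'. \<bar>s - s'\<bar> \<le> \<delta> \<longrightarrow> \<bar>F s - F s'\<bar> \<le> \<eta>"
    using F_unif[OF \<eta>] by blast
  define w0 where "w0 = max 1 (max (real r / \<delta>) (\<gamma> / \<delta>))"
  have "\<forall>w\<ge>w0. \<forall>x>0. \<bar>E_op K w r f x - f x\<bar> \<le> \<epsilon>"
  proof (intro allI impI)
    fix w x :: real assume w: "w \<ge> w0" and x: "x > 0"
    have w0: "w > 0" using w by (simp add: w0_def)
    have rw: "real r / w \<le> \<delta>" using w \<delta> w0 by (simp add: w0_def field_simps)
    have gw: "\<gamma> / w \<le> \<delta>" using w \<delta> w0 by (simp add: w0_def field_simps)
    define u where "u = x powr w"
    have u: "u > 0" using x by (simp add: u_def)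
    have lnu: "ln u = w * ln x" using x by (simp add: u_def ln_powr)
    define far where "far = {k::int. \<bar>real_of_int k - ln u\<bar> > \<gamma>}"
    define a where "a k = \<bar>K (exp (- real_of_int k) * u)\<bar>" for k :: int
    have pt: "ennreal \<bar>K (exp (- real_of_int k) * u) * (E_inner f w r k - f x)\<bar>
        \<le> ennreal ((2 ^ r + 1) * \<eta>) * ennreal (a k) + ennreal D * (ennreal (a k) * indicator far k)" for k
    proof (cases "k \<in> far")
      case True
      have "\<bar>E_inner f w r k - f x\<bar> \<le> D"
        using c_bound[OF w0, of k] fbd[OF x] by (simp add: D_def)
      then have "\<bar>K (exp (- real_of_int k) * u) * (E_inner f w r k - f x)\<bar> \<le> D * a k"
        unfolding a_def abs_mult by (metis abs_ge_zero mult.commute mult_left_mono)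
      then have "ennreal \<bar>K (exp (- real_of_int k) * u) * (E_inner f w r k - f x)\<bar> \<le> ennreal D * (ennreal (a k) * indicator far k)"
        using True D0 by (simp add: ennreal_mult[symmetric] a_def ennreal_leI del: ennreal_mult')
      then show ?thesis by (simp add: add_increasing)
    next
      case False
      then have "\<bar>real_of_int k - w * ln x\<bar> \<le> \<gamma>" by (simp add: far_def lnu)
      moreover have "real_of_int k / w - ln x = (real_of_int k - w * ln x) / w" using w0 by (simp add: field_simps)
      ultimately have "\<bar>real_of_int k / w - ln x\<bar> \<le> \<gamma> / w" using w0
        by (simp add: divide_right_mono)
      then have "\<bar>F (real_of_int k / w) - F (ln x)\<bar> \<le> \<eta>" using \<delta>(2) gw by auto
      moreover have "\<bar>E_inner f w r k - F (real_of_int k / w)\<bar> \<le> 2 ^ r * \<eta>"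
        by (rule c_close[OF w0 \<delta>(2) rw])
      moreover have "F (ln x) = f x" using x by (simp add: F_def)
      ultimately have "\<bar>E_inner f w r k - f x\<bar> \<le> (2 ^ r + 1) * \<eta>" by (simp add: algebra_simps)
      then have "\<bar>K (exp (- real_of_int k) * u) * (E_inner f w r k - f x)\<bar> \<le> (2 ^ r + 1) * \<eta> * a k"
        unfolding a_def abs_mult by (metis abs_ge_zero mult.commute mult_left_mono)
      then have "ennreal \<bar>K (exp (- real_of_int k) * u) * (E_inner f w r k - f x)\<bar> \<le> ennreal ((2 ^ r + 1) * \<eta>) * ennreal (a k)"
        using \<eta> by (simp add: ennreal_mult[symmetric] a_def ennreal_leI del: ennreal_mult')
      then show ?thesis by (simp add: add_increasing2)
    qed
    have "ennreal \<bar>E_op K w r f x - f x\<bar> \<le>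
      (\<integral>\<^sup>+k. ennreal \<bar>K (exp (- real_of_int k) * u) * (E_inner f w r k - f x)\<bar> \<partial>count_space UNIV)"
      using pointwise_bound[OF w0 x] by (simp add: u_def)
    also have "\<dots> \<le> (\<integral>\<^sup>+k. ennreal ((2 ^ r + 1) * \<eta>) * ennreal (a k) + ennreal D * (ennreal (a k) * indicator far k) \<partial>count_space UNIV)"
      by (intro nn_integral_mono pt)
    also have "\<dots> = ennreal ((2 ^ r + 1) * \<eta>) * (\<integral>\<^sup>+k. ennreal (a k) \<partial>count_space UNIV)
         + ennreal D * (\<integral>\<^sup>+k. ennreal (a k) \<partial>count_space far)"
      by (subst nn_integral_add) (auto simp: nn_integral_cmult nn_integral_count_space_indicator)
    also have "\<dots> \<le> ennreal ((2 ^ r + 1) * \<eta>) * ennreal M + ennreal D * ennreal \<epsilon>1"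
    proof (intro add_mono mult_left_mono)
      show "(\<integral>\<^sup>+k. ennreal (a k) \<partial>count_space UNIV) \<le> ennreal M" using KMle[OF u] by (simp add: a_def)
      show "(\<integral>\<^sup>+k. ennreal (a k) \<partial>count_space far) \<le> ennreal \<epsilon>1"
        using \<Gamma>[of \<gamma> u] u by (simp add: a_def far_def \<gamma>_def less_imp_le)
    qed auto
    also have "\<dots> = ennreal ((2 ^ r + 1) * \<eta> * M + D * \<epsilon>1)"
      using \<eta> M0 D0 \<epsilon>1 by (simp add: ennreal_mult[symmetric] ennreal_plus[symmetric] del: ennreal_mult' ennreal_plus)
    also have "\<dots> \<le> ennreal \<epsilon>"
    proof (rule ennreal_leI)
      have "(2 ^ r + 1) * \<eta> * M = \<epsilon> / 2 * (M / (M + 1))" using A M0 by (simp add: \<eta>_def A_def field_simps)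
      also have "\<dots> \<le> \<epsilon> / 2 * 1" using \<epsilon> M0 by (intro mult_left_mono) auto
      finally have 1: "(2 ^ r + 1) * \<eta> * M \<le> \<epsilon> / 2" by simp
      have "D * \<epsilon>1 = \<epsilon> / 2 * (D / (D + 1))" using D0 by (simp add: \<epsilon>1_def field_simps)
      also have "\<dots> \<le> \<epsilon> / 2 * 1" using \<epsilon> D0 by (intro mult_left_mono) auto
      finally have 2: "D * \<epsilon>1 \<le> \<epsilon> / 2" by simp
      show "(2 ^ r + 1) * \<eta> * M + D * \<epsilon>1 \<le> \<epsilon>" using 1 2 by simp
    qed
    finally show "\<bar>E_op K w r f x - f x\<bar> \<le> \<epsilon>" using \<epsilon> by (simp add: ennreal_le_iff)
  qed
  moreover have "w0 > 0" by (simp add: w0_def)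
  ultimately show ?thesis by blast
qed

end

context thmctx begin

definition W where "W w = {\<lceil>w * ln a\<rceil> - int r..\<lfloor>w * ln b\<rfloor>}"

lemma finW: "finite (W w)" by (simp add: W_def)

lemma outside_bound:
  assumes w: "w > 0" and x: "x > 0"
  shows "\<bar>E_op K w r f x\<bar> \<le> 2 ^ r * Bf * (\<Sum>k\<in>W w. \<bar>K (exp (- real_of_int k) * x powr w)\<bar>)"
    "(\<Sum>k\<in>W w. \<bar>K (exp (- real_of_int k) * x powr w)\<bar>) \<le> M"
proof -
  have "E_op K w r f x = (\<Sum>k\<in>W w. K (exp (- real_of_int k) * x powr w) * E_inner f w r k)"
    unfolding E_op_def
    by (subst infsum_finite[OF finW, symmetric], rule infsum_cong_neutral) (auto simp: c_zero[OF w] W_def)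
  also have "\<bar>\<dots>\<bar> \<le> (\<Sum>k\<in>W w. \<bar>K (exp (- real_of_int k) * x powr w)\<bar> * (2 ^ r * Bf))"
    by (rule order_trans[OF sum_abs], intro sum_mono)
       (simp add: abs_mult mult_left_mono c_bound[OF w])
  finally show "\<bar>E_op K w r f x\<bar> \<le> 2 ^ r * Bf * (\<Sum>k\<in>W w. \<bar>K (exp (- real_of_int k) * x powr w)\<bar>)"
    by (simp add: sum_distrib_left mult_ac)
  have u: "x powr w > 0" using x by simp
  have "ennreal (\<Sum>k\<in>W w. \<bar>K (exp (- real_of_int k) * x powr w)\<bar>) = (\<Sum>k\<in>W w. ennreal \<bar>K (exp (- real_of_int k) * x powr w)\<bar>)"
    by (simp add: sum_ennreal)
  also have "\<dots> = (\<integral>\<^sup>+k. ennreal \<bar>K (exp (- real_of_int k) * x powr w)\<bar> \<partial>count_space (W w))"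
    by (simp add: nn_integral_count_space_finite[OF finW])
  also have "\<dots> \<le> (\<integral>\<^sup>+k. ennreal \<bar>K (exp (- real_of_int k) * x powr w)\<bar> \<partial>count_space UNIV)"
    by (subst nn_integral_count_space_indicator) (auto intro!: nn_integral_mono split: split_indicator)
  also have "\<dots> \<le> ennreal M" by (rule KMle[OF u])
  finally show "(\<Sum>k\<in>W w. \<bar>K (exp (- real_of_int k) * x powr w)\<bar>) \<le> M" using M0 by (simp add: ennreal_le_iff)
qed

lemma card_W:
  assumes w: "w \<ge> 1"
  shows "real (card (W w)) / w \<le> ln b - ln a + real r + 1"
proof -
  have lab: "ln a \<le> ln b" using ab by simp
  have "real (card (W w)) = real (nat (\<lfloor>w * ln b\<rfloor> - (\<lceil>w * ln a\<rceil> - int r) + 1))" by (simp add: W_def)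
  also have "\<dots> \<le> w * ln b - w * ln a + real r + 1"
  proof -
    have "w * ln a \<le> w * ln b" using lab w by (intro mult_left_mono) auto
    moreover have "real_of_int (\<lfloor>w * ln b\<rfloor> - (\<lceil>w * ln a\<rceil> - int r) + 1) \<le> w * ln b - w * ln a + real r + 1"
      by linarith
    ultimately show ?thesis
      by (cases "\<lfloor>w * ln b\<rfloor> - (\<lceil>w * ln a\<rceil> - int r) + 1 \<ge> 0") auto
  qed
  finally have "real (card (W w)) \<le> w * (ln b - ln a + real r + 1) - (real r + 1) * (w - 1)"
    by (simp add: algebra_simps)
  also have "\<dots> \<le> w * (ln b - ln a + real r + 1)" using w by simp
  finally show ?thesis using w by (simp add: field_simps)
qed

definition KE where "KE s = K (exp s)"

lemma KEc: "continuous_on UNIV KE"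
  unfolding KE_def[abs_def]
  by (rule continuous_on_compose2[OF Kc]) (auto intro!: continuous_intros)

lemma KEm[measurable]: "KE \<in> borel_measurable borel"
  by (rule borel_measurable_continuous_onI[OF KEc])

lemma KE_int: "(\<integral>\<^sup>+s. ennreal \<bar>KE s\<bar> \<partial>lborel) < \<infinity>"
proof -
  define g where "g x = indicator {0<..} x *\<^sub>R \<bar>K x\<bar>" for x :: real
  have gm: "g \<in> borel_measurable borel" unfolding g_def[abs_def]
    by (rule borel_measurable_continuous_on_indicator) (auto intro!: continuous_intros Kc)
  have "(\<integral>\<^sup>+s. ennreal \<bar>KE s\<bar> \<partial>lborel) = (\<integral>\<^sup>+s. ennreal (g (exp s)) \<partial>lborel)"
    by (simp add: g_def KE_def)
  also have "\<dots> = (\<integral>\<^sup>+x\<in>{0<..}. ennreal (g x / x) \<partial>lborel)"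
    by (rule exp_subst[symmetric, OF gm]) (simp add: g_def)
  also have "\<dots> = (\<integral>\<^sup>+x\<in>{0<..}. ennreal (\<bar>K x\<bar> / x) \<partial>lborel)"
    by (intro nn_integral_cong) (simp add: g_def split: split_indicator)
  finally show ?thesis using Kint by simp
qed

definition T where "T R = (\<integral>\<^sup>+s. ennreal (\<bar>KE s\<bar> * indicator {s. R \<le> \<bar>s\<bar>} s) \<partial>lborel)"

lemma T_small:
  assumes \<theta>: "\<theta> > 0"
  shows "\<exists>R. T R < ennreal \<theta>"
proof -
  define h where "h n s = ennreal (\<bar>KE s\<bar> * indicator {s. real n \<le> \<bar>s\<bar>} s)" for n :: nat and s
  have dec: "decseq h"
    unfolding h_def by (intro decseq_SucI le_funI) (auto intro!: ennreal_leI split: split_indicator)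
  have hm: "h n \<in> borel_measurable lborel" for n unfolding h_def by measurable
  have hf: "(\<integral>\<^sup>+ s. h n s \<partial>lborel) < \<infinity>" for n
  proof -
    have "(\<integral>\<^sup>+ s. h n s \<partial>lborel) \<le> (\<integral>\<^sup>+s. ennreal \<bar>KE s\<bar> \<partial>lborel)"
      unfolding h_def by (intro nn_integral_mono) (auto intro!: ennreal_leI split: split_indicator)
    then show ?thesis using KE_int by (simp add: le_less_trans)
  qed
  have "(\<integral>\<^sup>+ s. (INF n. h n s) \<partial>lborel) = (INF n. integral\<^sup>N lborel (h n))"
    by (rule nn_integral_monotone_convergence_INF_decseq[OF dec hm hf])
  moreover have "(INF n. h n s) = 0" for s
  proof -
    obtain n :: nat where "\<bar>s\<bar> < real n" using reals_Archimedean2 by blast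
    then have "h n s = 0" by (simp add: h_def)
    then show ?thesis by (metis (no_types, lifting) INF_lower UNIV_I le_zero_eq)
  qed
  ultimately have "(INF n. integral\<^sup>N lborel (h n)) = 0" by simp
  then have "(INF n. integral\<^sup>N lborel (h n)) < ennreal \<theta>" using \<theta> by simp
  then obtain n where "integral\<^sup>N lborel (h n) < ennreal \<theta>" by (auto simp: INF_less_iff)
  then show ?thesis unfolding T_def h_def by blast
qed

lemma T_affine:
  assumes w: "w > 0"
  shows "(\<integral>\<^sup>+s. ennreal (\<bar>KE (w * s - c)\<bar> * indicator {s. R \<le> \<bar>s\<bar>} (w * s - c)) \<partial>lborel) = ennreal (1 / w) * T R"
proof -
  have "T R = ennreal w * (\<integral>\<^sup>+s. ennreal (\<bar>KE (- c + w * s)\<bar> * indicator {s. R \<le> \<bar>s\<bar>} (- c + w * s)) \<partial>lborel)"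
    unfolding T_def using w
    by (subst nn_integral_real_affine[where c = w and t = "- c"]) auto
  then have "ennreal (1 / w) * T R = (ennreal (1 / w) * ennreal w) * (\<integral>\<^sup>+s. ennreal (\<bar>KE (- c + w * s)\<bar> * indicator {s. R \<le> \<bar>s\<bar>} (- c + w * s)) \<partial>lborel)"
    by (simp add: mult.assoc)
  also have "ennreal (1 / w) * ennreal w = 1" using w by (simp add: ennreal_mult[symmetric] del: ennreal_mult')
  finally show ?thesis by (simp add: algebra_simps)
qed

end

context thmctx begin

lemma pw_bound:
  assumes p: "p \<ge> 1" and w: "w \<ge> 1" and wR: "w \<ge> R + real r" and x: "x > 0"
    and unif: "\<forall>x>0. \<bar>E_op K w r f x - f x\<bar> \<le> \<epsilon>"
  shows "\<bar>E_op K w r f x - f x\<bar> powr p \<le>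
     \<epsilon> powr p * indicator {ln a - 1..ln b + 1} (ln x) +
     (2 ^ r * Bf * (2 ^ r * Bf * M + 1) powr (p - 1)) *
       (\<Sum>k\<in>W w. \<bar>KE (w * ln x - real_of_int k)\<bar> * indicator {s. R \<le> \<bar>s\<bar>} (w * ln x - real_of_int k))"
    (is "?G powr p \<le> ?e * ?ind + ?C * ?S")
proof -
  define B where "B = 2 ^ r * Bf"
  have B0: "B \<ge> 0" using Bf0 by (simp add: B_def)
  have C0: "?C \<ge> 0" using B0 by (simp add: B_def[symmetric])
  have S0: "?S \<ge> 0" by (intro sum_nonneg) auto
  have w0: "w > 0" using w by simp
  show ?thesis
  proof (cases "ln x \<in> {ln a - 1..ln b + 1}")
    case True
    have "?G powr p \<le> \<epsilon> powr p" using unif x p by (intro powr_mono2) auto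
    moreover have "0 \<le> ?C * ?S" using C0 S0 by simp
    ultimately show ?thesis using True by simp
  next
    case False
    have "x \<notin> {a..b}"
    proof
      assume "x \<in> {a..b}"
      then have "ln a \<le> ln x" "ln x \<le> ln b" using ab x by auto
      then show False using False by auto
    qed
    then have fx: "f x = 0" using fsupp x by blast
    define S where "S = (\<Sum>k\<in>W w. \<bar>K (exp (- real_of_int k) * x powr w)\<bar>)"
    have GS: "?G \<le> B * S" and SM: "S \<le> M"
      using outside_bound[OF w0 x] fx by (simp_all add: S_def B_def)
    have "S = ?S" unfolding S_def
    proof (intro sum.cong refl)
      fix k assume k: "k \<in> W w"
      have "exp (- real_of_int k) * x powr w = exp (w * ln x - real_of_int k)"
        using x by (simp add: powr_def exp_diff exp_minus field_simps)
      moreover have "R \<le> \<bar>w * ln x - real_of_int k\<bar>"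
      proof -
        have k1: "real_of_int k \<le> w * ln b" and k2: "w * ln a - real r \<le> real_of_int k"
          using k unfolding W_def by (auto, linarith+)
        show ?thesis
        proof (cases "ln x > ln b + 1")
          case True
          then have "w * 1 \<le> w * (ln x - ln b)" using w0 by (intro mult_left_mono) auto
          then show ?thesis using k1 wR by (simp add: algebra_simps)
        next
          case False
          then have "ln x < ln a - 1" using \<open>ln x \<notin> _\<close> by auto
          then have "w * (ln x - ln a) \<le> w * (-1)" using w0 by (intro mult_left_mono) auto
          then show ?thesis using k2 wR by (simp add: algebra_simps)
        qed
      qed
      ultimately show "\<bar>K (exp (- real_of_int k) * x powr w)\<bar> =
        \<bar>KE (w * ln x - real_of_int k)\<bar> * indicator {s. R \<le> \<bar>s\<bar>} (w * ln x - real_of_int k)"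
        by (simp add: KE_def)
    qed
    have "?G powr p \<le> ?C * S"
    proof (cases "?G = 0")
      case True
      then show ?thesis using C0 SM by (simp add: S_def)
    next
      case False
      have "?G powr p = ?G powr (1 + (p - 1))" by simp
      also have "\<dots> = ?G powr 1 * ?G powr (p - 1)" by (rule powr_add)
      also have "\<dots> = ?G * ?G powr (p - 1)" using False by simp
      also have "\<dots> \<le> (B * S) * (B * M + 1) powr (p - 1)"
      proof (intro mult_mono GS powr_mono2)
        have "B * S \<le> B * M" using SM B0 by (intro mult_left_mono)
        then show "?G \<le> B * M + 1" using GS by linarith
      qed (use p B0 in \<open>auto simp: S_def\<close>)
      also have "\<dots> = ?C * S" by (simp add: B_def algebra_simps)
      finally show ?thesis .
    qed
    then show ?thesis using \<open>S = ?S\<close> False by simp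
  qed
qed

end

context thmctx begin

lemma Lp_small:
  assumes p: "p \<ge> 1" and \<theta>: "\<theta> > 0"
  shows "\<exists>w1. \<forall>w\<ge>w1. Lp_mellin_pow p (\<lambda>x. E_op K w r f x - f x) \<le> ennreal \<theta>"
proof -
  define C where "C = 2 ^ r * Bf * (2 ^ r * Bf * M + 1) powr (p - 1)"
  have C0: "C \<ge> 0" using Bf0 by (simp add: C_def)
  have lab: "ln a \<le> ln b" using ab by simp
  define Lab where "Lab = ln b - ln a + 2"
  have Lab: "Lab > 0" using lab by (simp add: Lab_def)
  define Lr where "Lr = ln b - ln a + real r + 1"
  have Lr: "Lr \<ge> 0" using lab by (simp add: Lr_def)
  define \<epsilon> where "\<epsilon> = (\<theta> / (2 * Lab)) powr (1 / p)"
  have \<epsilon>: "\<epsilon> > 0" using \<theta> Lab by (simp add: \<epsilon>_def)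
  have \<epsilon>p: "\<epsilon> powr p = \<theta> / (2 * Lab)" using p \<theta> Lab by (simp add: \<epsilon>_def powr_powr)
  obtain w0 where w0: "\<forall>w\<ge>w0. \<forall>x>0. \<bar>E_op K w r f x - f x\<bar> \<le> \<epsilon>"
    using unif_conv[OF \<epsilon>] by blast
  define \<theta>2 where "\<theta>2 = \<theta> / (2 * (C * Lr + 1))"
  have "C * Lr \<ge> 0" using C0 Lr by simp
  then have \<theta>2: "\<theta>2 > 0" using \<theta> unfolding \<theta>2_def by (intro divide_pos_pos) auto
  obtain R where R: "T R < ennreal \<theta>2" using T_small[OF \<theta>2] by blast
  define w1 where "w1 = max w0 (max 1 (R + real r))"
  have "\<forall>w\<ge>w1. Lp_mellin_pow p (\<lambda>x. E_op K w r f x - f x) \<le> ennreal \<theta>"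
  proof (intro allI impI)
    fix w assume w1w: "w \<ge> w1"
    have w: "w \<ge> 1" and wR: "w \<ge> R + real r" and ww0: "w \<ge> w0" using w1w by (auto simp: w1_def)
    have wpos: "w > 0" using w by simp
    define I where "I = {ln a - 1..ln b + 1}"
    define \<tau> where "\<tau> \<sigma> = \<bar>KE \<sigma>\<bar> * indicator {s. R \<le> \<bar>s\<bar>} \<sigma>" for \<sigma>
    have \<tau>0: "\<tau> \<sigma> \<ge> 0" for \<sigma> by (simp add: \<tau>_def)
    define \<Phi> where "\<Phi> x = \<epsilon> powr p * indicator I (ln x) + C * (\<Sum>k\<in>W w. \<tau> (w * ln x - real_of_int k))" for x
    have \<Phi>0: "\<Phi> x \<ge> 0" for x using C0 \<tau>0 by (simp add: \<Phi>_def sum_nonneg)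
    have \<Phi>m: "\<Phi> \<in> borel_measurable borel" unfolding \<Phi>_def[abs_def] \<tau>_def[abs_def] I_def by measurable
    have pw: "\<bar>E_op K w r f x - f x\<bar> powr p \<le> \<Phi> x" if "x > 0" for x
      using pw_bound[OF p w wR that, of \<epsilon>] w0 ww0 by (simp add: \<Phi>_def \<tau>_def I_def C_def)
    have "Lp_mellin_pow p (\<lambda>x. E_op K w r f x - f x) \<le> (\<integral>\<^sup>+x\<in>{0<..}. ennreal (\<Phi> x / x) \<partial>lborel)"
      unfolding Lp_mellin_pow_def
      by (intro nn_integral_mono) (auto split: split_indicator intro!: ennreal_leI divide_right_mono pw)
    also have "\<dots> = (\<integral>\<^sup>+s. ennreal (\<Phi> (exp s)) \<partial>lborel)" by (rule exp_subst[OF \<Phi>m \<Phi>0])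
    also have "\<dots> = (\<integral>\<^sup>+s. ennreal (\<epsilon> powr p) * indicator I s + ennreal C * (\<Sum>k\<in>W w. ennreal (\<tau> (w * s - real_of_int k))) \<partial>lborel)"
    proof (intro nn_integral_cong)
      fix s
      have "ennreal (\<Phi> (exp s)) = ennreal (\<epsilon> powr p * indicator I s) + ennreal (C * (\<Sum>k\<in>W w. \<tau> (w * s - real_of_int k)))"
        using C0 \<tau>0 by (subst ennreal_plus[symmetric]) (auto simp: \<Phi>_def intro!: sum_nonneg mult_nonneg_nonneg)
      also have "\<dots> = ennreal (\<epsilon> powr p) * indicator I s + ennreal C * (\<Sum>k\<in>W w. ennreal (\<tau> (w * s - real_of_int k)))"
        using C0 \<tau>0 by (simp add: ennreal_mult sum_ennreal sum_nonneg split: split_indicator)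
      finally show "ennreal (\<Phi> (exp s)) = \<dots>" .
    qed
    also have "\<dots> = ennreal (\<epsilon> powr p) * emeasure lborel I + ennreal C * (\<Sum>k\<in>W w. (\<integral>\<^sup>+s. ennreal (\<tau> (w * s - real_of_int k)) \<partial>lborel))"
      unfolding \<tau>_def I_def
      by (subst nn_integral_add; (subst nn_integral_cmult)?; (subst nn_integral_sum)?) (auto simp: nn_integral_cmult_indicator)
    also have "\<dots> = ennreal (\<epsilon> powr p) * ennreal Lab + ennreal C * (\<Sum>k\<in>W w. ennreal (1 / w) * T R)"
    proof -
      have "emeasure lborel I = ennreal ((ln b + 1) - (ln a - 1))" using lab unfolding I_def by (intro emeasure_lborel_Icc) simp
      also have "(ln b + 1) - (ln a - 1) = Lab" by (simp add: Lab_def)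
      finally have eI: "emeasure lborel I = ennreal Lab" .
      show ?thesis unfolding \<tau>_def eI T_affine[OF wpos] ..
    qed
    also have "\<dots> \<le> ennreal (\<epsilon> powr p) * ennreal Lab + ennreal C * (\<Sum>k\<in>W w. ennreal (1 / w) * ennreal \<theta>2)"
      using R by (intro add_mono mult_left_mono sum_mono) auto
    also have "\<dots> = ennreal (\<epsilon> powr p * Lab + C * (real (card (W w)) / w * \<theta>2))"
      using C0 Lab \<theta>2 wpos
      by (simp add: ennreal_mult[symmetric] ennreal_plus[symmetric] ennreal_of_nat_eq_real_of_nat del: ennreal_mult' ennreal_plus)
    also have "\<dots> \<le> ennreal \<theta>"
    proof (rule ennreal_leI)
      have "C * (real (card (W w)) / w * \<theta>2) \<le> C * (Lr * \<theta>2)"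
        using card_W[OF w] C0 \<theta>2 by (intro mult_left_mono mult_right_mono) (auto simp: Lr_def)
      also have "\<dots> = \<theta> / 2 * (C * Lr / (C * Lr + 1))" using C0 Lr by (simp add: \<theta>2_def field_simps)
      also have "\<dots> \<le> \<theta> / 2 * 1" using \<theta> \<open>C * Lr \<ge> 0\<close> by (intro mult_left_mono) auto
      finally have 1: "C * (real (card (W w)) / w * \<theta>2) \<le> \<theta> / 2" by simp
      have 2: "\<epsilon> powr p * Lab = \<theta> / 2" using \<epsilon>p Lab by simp
      show "\<epsilon> powr p * Lab + C * (real (card (W w)) / w * \<theta>2) \<le> \<theta>" using 1 2 by linarith
    qed
    finally show "Lp_mellin_pow p (\<lambda>x. E_op K w r f x - f x) \<le> ennreal \<theta>" .
  qed
  then show ?thesis by blast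
qed

end

theorem theorem3:
  fixes K f :: "real \<Rightarrow> real" and r :: nat and p :: real
  assumes "r \<ge> 1"
    and "is_kernel K"
    and "M0 K > 0"
    and "CB_comp f"
    and "1 \<le> p"
  shows "eventually (\<lambda>w. Lp_mellin_pow p (\<lambda>x. E_op K w r f x - f x) < \<infinity>) at_top \<and>
         ((\<lambda>w. Lp_mellin_norm p (\<lambda>x. E_op K w r f x - f x)) \<longlongrightarrow> 0) at_top"
proof -
  from assms(4) obtain a b where fc: "continuous_on {0<..} f" and fbdd: "bounded (f ` {0<..})"
    and ab: "0 < a" "a \<le> b" and fs: "\<And>x. x > 0 \<Longrightarrow> x \<notin> {a..b} \<Longrightarrow> f x = 0"
    unfolding CB_comp_def by blast
  from fbdd obtain Bf where Bf: "\<And>x. x > 0 \<Longrightarrow> \<bar>f x\<bar> \<le> Bf"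
    unfolding bounded_iff by auto
  interpret thmctx K f r a b Bf
    using assms(1,2) fc Bf ab fs by unfold_locales auto
  have p: "p \<ge> 1" using assms(5) .
  have ev: "eventually (\<lambda>w. Lp_mellin_pow p (\<lambda>x. E_op K w r f x - f x) \<le> ennreal \<theta>) at_top" if "\<theta> > 0" for \<theta>
    using Lp_small[OF p that] by (auto simp: eventually_at_top_linorder)
  show ?thesis
  proof
    show "eventually (\<lambda>w. Lp_mellin_pow p (\<lambda>x. E_op K w r f x - f x) < \<infinity>) at_top"
      using ev[OF zero_less_one] by eventually_elim (auto simp: le_less_trans)
    show "((\<lambda>w. Lp_mellin_norm p (\<lambda>x. E_op K w r f x - f x)) \<longlongrightarrow> 0) at_top"
    proof (rule tendstoI)
      fix e :: real assume e: "e > 0"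
      define \<theta> where "\<theta> = (e / 2) powr p"
      have \<theta>: "\<theta> > 0" using e by (simp add: \<theta>_def)
      show "eventually (\<lambda>w. dist (Lp_mellin_norm p (\<lambda>x. E_op K w r f x - f x)) 0 < e) at_top"
        using ev[OF \<theta>]
      proof eventually_elim
        case (elim w)
        define L where "L = Lp_mellin_pow p (\<lambda>x. E_op K w r f x - f x)"
        have "enn2real L \<le> \<theta>"
        proof -
          have "enn2real L \<le> enn2real (ennreal \<theta>)"
            by (rule enn2real_mono) (use elim in \<open>simp_all add: L_def\<close>)
          then show ?thesis using \<theta> by simp
        qed
        then have "enn2real L powr (1 / p) \<le> \<theta> powr (1 / p)"
          using p by (intro powr_mono2) auto
        also have "\<theta> powr (1 / p) = e / 2" using p e by (simp add: \<theta>_def powr_powr)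
        finally have "enn2real L powr (1 / p) < e" using e by simp
        then show ?case by (simp add: Lp_mellin_norm_def L_def)
      qed
    qed
  qed
qed

end
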